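(* For all nonnegative integers $k,l$, \[ \sum_{n=0}^\infty\frac{Q_l(H_{n+1},H_{n+1}^{(2)},\dots,H_{n+1}^{(l)})\,P_k(H_n,H_n^{(2)},\dots,H_n^{(k)})}{(n+1)^2}=\binom{l+k+1}{l}\zeta(l+k+2). \]
   Context: For integers $r\ge1$ and $n\ge0$, $H_n^{(r)}=\sum_{j=1}^n j^{-r}$ (so $H_0^{(r)}=0$) and $H_n=H_n^{(1)}$. $P_0=Q_0=1$ and for $n\ge1$, $P_n(y_1,\dots,y_n)=\sum_{m_1+2m_2+\cdots=n}\frac{(-1)^{m_2+m_4+\cdots}}{m_1!m_2!\cdots}\prod_{i\ge1}(y_i/i)^{m_i}$, $Q_n(y_1,\dots,y_n)=\sum_{m_1+2m_2+\cdots=n}\frac{1}{m_1!m_2!\cdots}\prod_{i\ge1}(y_i/i)^{m_i}$. $\zeta$ is the Riemann zeta function. *)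

theory Defs
  imports Complex_Main
begin

definition gharm :: "nat \<Rightarrow> nat \<Rightarrow> real" where
  "gharm r n = (\<Sum>j=1..n. 1 / (real j) ^ r)"

definition part_mults :: "nat \<Rightarrow> (nat \<Rightarrow> nat) set" where
  "part_mults n = {m. (\<forall>i. m i \<noteq> 0 \<longrightarrow> i \<in> {1..n}) \<and> (\<Sum>i=1..n. i * m i) = n}"

text \<open>P_n(y_1,...,y_n); only y 1, ..., y n are used.\<close>
definition Ppoly :: "nat \<Rightarrow> (nat \<Rightarrow> real) \<Rightarrow> real" where
  "Ppoly n y = (\<Sum>m\<in>part_mults n.
      (-1) ^ (\<Sum>i\<in>{i\<in>{1..n}. even i}. m i) / (\<Prod>i=1..n. fact (m i))
      * (\<Prod>i=1..n. (y i / real i) ^ m i))"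

text \<open>Q_n(y_1,...,y_n); only y 1, ..., y n are used.\<close>
definition Qpoly :: "nat \<Rightarrow> (nat \<Rightarrow> real) \<Rightarrow> real" where
  "Qpoly n y = (\<Sum>m\<in>part_mults n.
      1 / (\<Prod>i=1..n. fact (m i)) * (\<Prod>i=1..n. (y i / real i) ^ m i))"

text \<open>Riemann zeta at integer arguments s >= 2 (series definition).\<close>
definition zeta_nat :: "nat \<Rightarrow> real" where
  "zeta_nat s = (\<Sum>j. 1 / (real (Suc j)) ^ s)"

end

theory Submission
  imports Defs "HOL-Analysis.Analysis" "HOL-Real_Asymp.Real_Asymp"
begin


definition TT :: "(nat \<Rightarrow> real) \<Rightarrow> nat \<Rightarrow> (nat \<Rightarrow> nat) \<Rightarrow> real" where
  "TT w K m = (\<Prod>i=1..K. (w i / real i) ^ m i / fact (m i))"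

definition RR :: "(nat \<Rightarrow> real) \<Rightarrow> nat \<Rightarrow> real" where
  "RR w k = (\<Sum>m\<in>part_mults k. TT w k m)"

lemma part_mults_finite: "finite (part_mults n)"
proof -
  have "part_mults n \<subseteq> {f. \<forall>x. (x \<in> {1..n} \<longrightarrow> f x \<in> {0..n}) \<and> (x \<notin> {1..n} \<longrightarrow> f x = 0)}"
  proof safe
    fix m x assume m: "m \<in> part_mults n" and x: "x \<in> {1..n}"
    have "m x \<le> x * m x" using x by simp
    also have "\<dots> \<le> (\<Sum>i=1..n. i * m i)" by (rule member_le_sum) (use x in auto)
    also have "\<dots> = n" using m by (simp add: part_mults_def)
    finally show "m x \<in> {0..n}" by simp
  next
    fix m x assume m: "m \<in> part_mults n" and x: "x \<notin> {1..n}"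
    then show "m x = 0" by (auto simp: part_mults_def)
  qed
  moreover have "finite {f. \<forall>x. (x \<in> {1..n} \<longrightarrow> f x \<in> {0..n}) \<and> (x \<notin> {1..n} \<longrightarrow> f x = (0::nat))}"
    by (rule finite_set_of_finite_funs) auto
  ultimately show ?thesis by (rule finite_subset)
qed

lemma part_mults_0: "part_mults 0 = {\<lambda>_. 0}"
  by (auto simp: part_mults_def)

lemma RR_0: "RR w 0 = 1"
  by (simp add: RR_def part_mults_0 TT_def)

lemma TT_mono:
  fixes m :: "nat \<Rightarrow> nat" and K K' :: nat
  assumes "\<And>j. m j \<noteq> 0 \<Longrightarrow> j \<in> {1..K}" "K \<le> K'"
  shows "TT w K' m = TT w K m"
  unfolding TT_def
proof (rule prod.mono_neutral_right)
  show "\<forall>i\<in>{1..K'} - {1..K}. (w i / real i) ^ m i / fact (m i) = 1"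
  proof
    fix i assume "i \<in> {1..K'} - {1..K}"
    then have "m i = 0" using assms(1) by blast
    then show "(w i / real i) ^ m i / fact (m i) = 1" by simp
  qed
qed (use assms(2) in auto)

lemma TT_upd:
  assumes "i \<in> {1..K}"
  shows "TT w K (m(i := m i + 1)) = TT w K m * (w i / real i) / real (m i + 1)"
proof -
  let ?F = "\<lambda>m j. (w j / real j) ^ m j / fact (m j)"
  have "TT w K (m(i := m i + 1)) = ?F (m(i := m i + 1)) i * (\<Prod>j\<in>{1..K}-{i}. ?F (m(i := m i + 1)) j)"
    unfolding TT_def by (rule prod.remove) (use assms in auto)
  also have "(\<Prod>j\<in>{1..K}-{i}. ?F (m(i := m i + 1)) j) = (\<Prod>j\<in>{1..K}-{i}. ?F m j)"
    by (rule prod.cong) auto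
  also have "TT w K m = ?F m i * (\<Prod>j\<in>{1..K}-{i}. ?F m j)"
    unfolding TT_def by (rule prod.remove) (use assms in auto)
  moreover have "?F (m(i := m i + 1)) i = ?F m i * (w i / real i) / real (m i + 1)"
    by (simp add: fact_Suc power_Suc divide_simps)
  ultimately show ?thesis by (simp only:) (simp add: divide_simps ac_simps)
qed

lemma wsum_mono:
  fixes m :: "nat \<Rightarrow> nat" and K K' :: nat
  assumes "\<And>j. m j \<noteq> 0 \<Longrightarrow> j \<in> {1..K}" "K \<le> K'"
  shows "(\<Sum>j=1..K'. j * m j) = (\<Sum>j=1..K. j * m j)"
proof (rule sum.mono_neutral_right)
  show "\<forall>i\<in>{1..K'} - {1..K}. i * m i = 0"
  proof
    fix i assume "i \<in> {1..K'} - {1..K}"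
    then have "m i = 0" using assms(1) by blast
    then show "i * m i = 0" by simp
  qed
qed (use assms(2) in auto)

lemma pm_up:
  assumes m: "m \<in> part_mults (k - i)" and i: "i \<in> {1..k}"
  shows "m(i := m i + 1) \<in> part_mults k"
proof -
  have supp: "\<And>j. m j \<noteq> 0 \<Longrightarrow> j \<in> {1..k-i}" using m by (auto simp: part_mults_def)
  have "(\<Sum>j=1..k. j * (m(i := m i + 1)) j) = (\<Sum>j=1..k. j * m j + (if j = i then i else 0))"
    by (rule sum.cong) auto
  also have "\<dots> = (\<Sum>j=1..k. j * m j) + i" using i by (simp add: sum.distrib)
  also have "(\<Sum>j=1..k. j * m j) = (\<Sum>j=1..k-i. j * m j)"
    by (rule wsum_mono[OF supp]) auto
  also have "\<dots> = k - i" using m by (simp add: part_mults_def)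
  finally have "(\<Sum>j=1..k. j * (m(i := m i + 1)) j) = k" using i by simp
  moreover have "\<forall>j. (m(i := m i + 1)) j \<noteq> 0 \<longrightarrow> j \<in> {1..k}"
  proof (intro allI impI)
    fix j assume "(m(i := m i + 1)) j \<noteq> 0"
    then show "j \<in> {1..k}" using supp[of j] i by (cases "j = i") auto
  qed
  ultimately show ?thesis by (simp add: part_mults_def)
qed

lemma pm_down:
  assumes m: "m \<in> part_mults k" and i: "i \<in> {1..k}" and pos: "m i > 0"
  shows "m(i := m i - 1) \<in> part_mults (k - i)"
proof -
  let ?m = "m(i := m i - 1)"
  have supp: "\<And>j. m j \<noteq> 0 \<Longrightarrow> j \<in> {1..k}" using m by (auto simp: part_mults_def)
  have "(\<Sum>j=1..k. j * m j) = (\<Sum>j=1..k. j * ?m j + (if j = i then i else 0))"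
    by (rule sum.cong) (use pos in \<open>auto simp: algebra_simps\<close>)
  also have "\<dots> = (\<Sum>j=1..k. j * ?m j) + i" using i by (simp add: sum.distrib)
  finally have s0: "(\<Sum>j=1..k. j * m j) = (\<Sum>j=1..k. j * ?m j) + i" .
  have "(\<Sum>j=1..k. j * m j) = k" using m by (simp add: part_mults_def)
  with s0 have s: "(\<Sum>j=1..k. j * ?m j) = k - i" by linarith
  have supp2: "j \<in> {1..k-i}" if "?m j \<noteq> 0" for j
  proof -
    have j: "j \<in> {1..k}" using supp[of j] that by (cases "j = i") auto
    have "j \<le> j * ?m j" using that by simp
    also have "\<dots> \<le> (\<Sum>j=1..k. j * ?m j)" by (rule member_le_sum) (use j in auto)
    finally show ?thesis using s j by simp
  qed
  have "(\<Sum>j=1..k-i. j * ?m j) = (\<Sum>j=1..k. j * ?m j)"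
    by (rule wsum_mono[OF supp2, symmetric]) auto
  with s supp2 show ?thesis by (auto simp: part_mults_def)
qed

lemma RR_newton_i:
  assumes i: "i \<in> {1..k}"
  shows "(\<Sum>m\<in>part_mults k. real (i * m i) * TT w k m) = w i * RR w (k - i)"
proof -
  have "(\<Sum>m\<in>part_mults k. real (i * m i) * TT w k m) =
        (\<Sum>m\<in>{m\<in>part_mults k. m i > 0}. real (i * m i) * TT w k m)"
    by (rule sum.mono_neutral_right) (auto simp: part_mults_finite)
  also have "\<dots> = (\<Sum>m'\<in>part_mults (k-i). real (i * (m'(i := m' i + 1)) i) * TT w k (m'(i := m' i + 1)))"
    by (rule sum.reindex_bij_witness[where i="\<lambda>m. m(i := m i + 1)" and j="\<lambda>m. m(i := m i - 1)"])
       (use i pm_down[of _ k i] pm_up[of _ k i] in auto)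
  also have "\<dots> = (\<Sum>m'\<in>part_mults (k-i). w i * TT w (k-i) m')"
  proof (rule sum.cong)
    fix m assume m: "m \<in> part_mults (k - i)"
    have supp: "\<And>j. m j \<noteq> 0 \<Longrightarrow> j \<in> {1..k-i}" using m by (auto simp: part_mults_def)
    have h1: "TT w k m = TT w (k-i) m" by (rule TT_mono[OF supp]) auto
    have h2: "TT w k (m(i := m i + 1)) = TT w k m * (w i / real i) / real (m i + 1)"
      by (rule TT_upd[OF i])
    show "real (i * (m(i := m i + 1)) i) * TT w k (m(i := m i + 1)) = w i * TT w (k-i) m"
    proof -
      have "real i > 0" using i by simp
      then have "real i + real i * real (m i) > 0" by (simp add: add_pos_nonneg)
      then have "real i + real i * real (m i) \<noteq> 0" by simp
      with h1 h2 show ?thesis using i by (simp add: field_simps)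
    qed
  qed simp
  also have "\<dots> = w i * RR w (k - i)" by (simp add: RR_def sum_distrib_left)
  finally show ?thesis .
qed

lemma RR_newton:
  "real k * RR w k = (\<Sum>i=1..k. w i * RR w (k - i))"
proof -
  have "real k * RR w k = (\<Sum>m\<in>part_mults k. real k * TT w k m)"
    by (simp add: RR_def sum_distrib_left)
  also have "\<dots> = (\<Sum>m\<in>part_mults k. (\<Sum>i=1..k. real (i * m i)) * TT w k m)"
  proof (rule sum.cong)
    fix m assume "m \<in> part_mults k"
    then have "(\<Sum>i=1..k. i * m i) = k" by (simp add: part_mults_def)
    then have "(\<Sum>i=1..k. real (i * m i)) = real k" by (metis of_nat_sum)
    then show "real k * TT w k m = (\<Sum>i=1..k. real (i * m i)) * TT w k m" by simp
  qed simp
  also have "\<dots> = (\<Sum>i=1..k. \<Sum>m\<in>part_mults k. real (i * m i) * TT w k m)"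
    by (simp add: sum_distrib_right sum.swap[of _ "part_mults k"])
  also have "\<dots> = (\<Sum>i=1..k. w i * RR w (k - i))"
  proof (rule sum.cong)
    fix i assume "i \<in> {1..k}"
    then show "(\<Sum>m\<in>part_mults k. real (i * m i) * TT w k m) = w i * RR w (k - i)"
      by (rule RR_newton_i)
  qed simp
  finally show ?thesis .
qed

lemma RR_newton_Suc:
  "real (Suc k) * RR w (Suc k) = (\<Sum>i\<le>k. w (Suc i) * RR w (k - i))"
proof -
  have "(\<Sum>i=1..Suc k. w i * RR w (Suc k - i)) = (\<Sum>i\<le>k. w (Suc i) * RR w (k - i))"
  proof -
    have "{1..Suc k} = {Suc 0..Suc k}" by simp
    then show ?thesis by (simp only: sum.atLeast_Suc_atMost_Suc_shift atLeast0AtMost o_def) simp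
  qed
  then show ?thesis using RR_newton[of "Suc k" w] by simp
qed

lemma newton_unique:
  assumes "c 0 = 1" "d 0 = 1"
    and "\<And>k. real (Suc k) * c (Suc k) = (\<Sum>i\<le>k. w (Suc i) * c (k - i))"
    and "\<And>k. real (Suc k) * d (Suc k) = (\<Sum>i\<le>k. w (Suc i) * d (k - i))"
  shows "c n = (d n :: real)"
proof (induction n rule: less_induct)
  case (less n)
  show ?case
  proof (cases n)
    case 0 then show ?thesis using assms by simp
  next
    case (Suc k)
    have "(\<Sum>i\<le>k. w (Suc i) * c (k - i)) = (\<Sum>i\<le>k. w (Suc i) * d (k - i))"
      by (rule sum.cong) (use less Suc in auto)
    then have "real (Suc k) * c (Suc k) = real (Suc k) * d (Suc k)" using assms(3,4) by simp
    then show ?thesis using Suc by simp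
  qed
qed



fun ee :: "nat \<Rightarrow> nat \<Rightarrow> real" where
  "ee 0 n = 1"
| "ee (Suc k) 0 = 0"
| "ee (Suc k) (Suc n) = ee (Suc k) n + ee k n / real (Suc n)"

fun hh :: "nat \<Rightarrow> nat \<Rightarrow> real" where
  "hh 0 n = 1"
| "hh (Suc l) 0 = 0"
| "hh (Suc l) (Suc n) = hh (Suc l) n + hh l (Suc n) / real (Suc n)"

lemma gharm_0 [simp]: "gharm i 0 = 0" by (simp add: gharm_def)
lemma gharm_Suc: "gharm i (Suc n) = gharm i n + (1 / real (Suc n)) ^ i"
  by (simp add: gharm_def power_one_over)

lemma ee_Suc_n: "ee j (Suc n) = ee j n + (if j = 0 then 0 else ee (j - 1) n / real (Suc n))"
  by (cases j) auto

lemma ee_C: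
  fixes z :: real
  assumes z: "z = 1 / real (Suc n)"
  shows "(\<Sum>i\<le>k. (-1)^i * z^(Suc i) * ee (k - i) (Suc n)) = z * ee k n"
proof (induction k)
  case 0 then show ?case by simp
next
  case (Suc k)
  have "(\<Sum>i\<le>Suc k. (-1)^i * z^(Suc i) * ee (Suc k - i) (Suc n))
      = z * ee (Suc k) (Suc n) + (\<Sum>i\<le>k. (-1)^(Suc i) * z^(Suc (Suc i)) * ee (Suc k - Suc i) (Suc n))"
    by (simp only: sum.atMost_Suc_shift) simp
  also have "(\<Sum>i\<le>k. (-1)^(Suc i) * z^(Suc (Suc i)) * ee (Suc k - Suc i) (Suc n))
      = - z * (\<Sum>i\<le>k. (-1)^i * z^(Suc i) * ee (k - i) (Suc n))"
    by (auto simp: sum_distrib_left power_Suc mult_ac sum_negf[symmetric] intro!: sum.cong)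
  also have "\<dots> = - z * (z * ee k n)" using Suc by simp
  also have "ee (Suc k) (Suc n) = ee (Suc k) n + z * ee k n" using z by simp
  finally show ?case by (simp add: algebra_simps)
qed

lemma ee_newton:
  "real (Suc k) * ee (Suc k) n = (\<Sum>i\<le>k. (-1)^i * gharm (Suc i) n * ee (k - i) n)"
proof (induction n arbitrary: k)
  case 0 then show ?case by simp
next
  case (Suc n)
  define z where "z = 1 / real (Suc n)"
  have A: "(\<Sum>i\<le>k. (-1)^i * gharm (Suc i) n * ee (k - i) n) = real (Suc k) * ee (Suc k) n"
    using Suc by simp
  have B: "(\<Sum>i\<le>k. (-1)^i * gharm (Suc i) n * (if k - i = 0 then 0 else ee (k - i - 1) n / real (Suc n)))
         = z * real k * ee k n"
  proof (cases k)
    case 0 then show ?thesis by simp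
  next
    case (Suc k')
    have "(\<Sum>i\<le>k. (-1)^i * gharm (Suc i) n * (if k - i = 0 then 0 else ee (k - i - 1) n / real (Suc n)))
        = (\<Sum>i\<le>k'. (-1)^i * gharm (Suc i) n * (if k - i = 0 then 0 else ee (k - i - 1) n / real (Suc n)))"
      using Suc by simp
    also have "\<dots> = (\<Sum>i\<le>k'. z * ((-1)^i * gharm (Suc i) n * ee (k' - i) n))"
      by (rule sum.cong) (use Suc in \<open>auto simp: z_def Suc_diff_le\<close>)
    also have "\<dots> = z * (real (Suc k') * ee (Suc k') n)"
      using Suc.IH[of k'] by (simp add: sum_distrib_left[symmetric])
    finally show ?thesis using Suc by simp
  qed
  have C: "(\<Sum>i\<le>k. (-1)^i * z^(Suc i) * ee (k - i) (Suc n)) = z * ee k n"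
    by (rule ee_C) (simp add: z_def)
  have "(\<Sum>i\<le>k. (-1)^i * gharm (Suc i) (Suc n) * ee (k - i) (Suc n))
      = (\<Sum>i\<le>k. (-1)^i * gharm (Suc i) n * ee (k - i) n)
        + (\<Sum>i\<le>k. (-1)^i * gharm (Suc i) n * (if k - i = 0 then 0 else ee (k - i - 1) n / real (Suc n)))
        + (\<Sum>i\<le>k. (-1)^i * z^(Suc i) * ee (k - i) (Suc n))"
    by (simp add: gharm_Suc ee_Suc_n[of "k - _"] z_def sum.distrib[symmetric] algebra_simps
          del: power_Suc)
  also have "\<dots> = real (Suc k) * (ee (Suc k) n + z * ee k n)"
    using A B C by (simp add: algebra_simps)
  also have "ee (Suc k) n + z * ee k n = ee (Suc k) (Suc n)" by (simp add: z_def)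
  finally show ?case by simp
qed

lemma hh_newton:
  "real (Suc k) * hh (Suc k) n = (\<Sum>i\<le>k. gharm (Suc i) n * hh (k - i) n)"
proof (induction n arbitrary: k)
  case 0 then show ?case by simp
next
  case (Suc n)
  define z where "z = 1 / real (Suc n)"
  have hS: "hh j (Suc n) = hh j n + (if j = 0 then 0 else z * hh (j - 1) (Suc n))" for j
    by (cases j) (auto simp: z_def)
  define S where "S k = (\<Sum>i\<le>k. z^(Suc i) * hh (k - i) (Suc n))" for k
  have S_Suc: "S (Suc k) = z * hh (Suc k) (Suc n) + z * S k" for k
    unfolding S_def by (subst sum.atMost_Suc_shift) (simp add: sum_distrib_left algebra_simps)
  note IHn = Suc.IH
  show ?case
  proof (induction k)
    case 0 then show ?case using IHn[of 0] by (simp add: gharm_Suc z_def)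
  next
    case (Suc k)
    have A: "(\<Sum>i\<le>Suc k. gharm (Suc i) n * hh (Suc k - i) n) = real (Suc (Suc k)) * hh (Suc (Suc k)) n"
      using IHn[of "Suc k"] by simp
    have B0: "(\<Sum>i\<le>Suc k. gharm (Suc i) n * (if Suc k - i = 0 then 0 else z * hh (Suc k - i - 1) (Suc n)))
        = (\<Sum>i\<le>k. z * (gharm (Suc i) n * hh (k - i) (Suc n)))"
      by (simp add: Suc_diff_le algebra_simps)
    have B1: "(\<Sum>i\<le>k. gharm (Suc i) n * hh (k - i) (Suc n))
        = real (Suc k) * hh (Suc k) (Suc n) - S k"
      using Suc.IH by (simp add: S_def gharm_Suc z_def sum.distrib algebra_simps power_one_over)
    have B2: "z * (\<Sum>i\<le>k. gharm (Suc i) n * hh (k - i) (Suc n))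
        = z * (real (Suc k) * hh (Suc k) (Suc n)) - z * S k"
      using arg_cong[OF B1, of "\<lambda>x. z * x"] by (simp add: algebra_simps del: hh.simps)
    have "(\<Sum>i\<le>Suc k. gharm (Suc i) (Suc n) * hh (Suc k - i) (Suc n))
        = (\<Sum>i\<le>Suc k. gharm (Suc i) n * hh (Suc k - i) n)
          + (\<Sum>i\<le>Suc k. gharm (Suc i) n * (if Suc k - i = 0 then 0 else z * hh (Suc k - i - 1) (Suc n)))
          + S (Suc k)"
      by (simp add: gharm_Suc hS[of "Suc k - _"] S_def z_def sum.distrib[symmetric] algebra_simps power_one_over
          del: power_Suc)
    also have "\<dots> = real (Suc (Suc k)) * (hh (Suc (Suc k)) n + z * hh (Suc k) (Suc n))"
      using A B0 B2 S_Suc[of k] by (simp add: sum_distrib_left[symmetric] algebra_simps del: hh.simps)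
    also have "hh (Suc (Suc k)) n + z * hh (Suc k) (Suc n) = hh (Suc (Suc k)) (Suc n)"
      by (simp add: z_def)
    finally show ?case by simp
  qed
qed



lemma Qpoly_RR: "Qpoly k y = RR y k"
  unfolding Qpoly_def RR_def TT_def
  by (rule sum.cong) (simp_all add: prod_dividef)

lemma Ppoly_RR: "Ppoly k y = RR (\<lambda>i. (-1)^(i-1) * y i) k"
  unfolding Ppoly_def RR_def TT_def
proof (rule sum.cong)
  fix m assume "m \<in> part_mults k"
  have sgn: "(\<Prod>i=1..k. ((-1::real)^(i-1))^(m i)) = (-1) ^ (\<Sum>i\<in>{i\<in>{1..k}. even i}. m i)"
  proof -
    have "(\<Prod>i=1..k. ((-1::real)^(i-1))^(m i)) = (\<Prod>i=1..k. if even i then (-1)^(m i) else 1)"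
    proof (rule prod.cong)
      fix i assume i: "i \<in> {1..k}"
      show "((-1::real)^(i-1))^(m i) = (if even i then (-1)^(m i) else 1)"
      proof (cases "even i")
        case True
        then have "odd (i - 1)" using i by simp
        then show ?thesis using True by simp
      next
        case False
        then have "even (i - 1)" using i by simp
        then show ?thesis using False by simp
      qed
    qed simp
    also have "\<dots> = (\<Prod>i\<in>{i\<in>{1..k}. even i}. (-1)^(m i))"
      by (rule prod.inter_filter[symmetric]) simp
    also have "\<dots> = (-1) ^ (\<Sum>i\<in>{i\<in>{1..k}. even i}. m i)"
      by (rule power_sum[symmetric])
    finally show ?thesis .
  qed
  have "(\<Prod>i=1..k. ((-1)^(i-1) * y i / real i) ^ m i / fact (m i))
     = (\<Prod>i=1..k. ((-1::real)^(i-1))^(m i)) * ((\<Prod>i=1..k. (y i / real i) ^ m i) / (\<Prod>i=1..k. fact (m i)))"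
  proof -
    have "(\<Prod>i=1..k. ((-1)^(i-1) * y i / real i) ^ m i / fact (m i))
       = (\<Prod>i=1..k. ((-1::real)^(i-1))^(m i) * ((y i / real i) ^ m i / fact (m i)))"
      by (rule prod.cong) (simp_all add: power_mult_distrib flip: times_divide_eq_right)
    then show ?thesis by (simp add: prod.distrib prod_dividef)
  qed
  then show "(-1) ^ (\<Sum>i\<in>{i\<in>{1..k}. even i}. m i) / (\<Prod>i=1..k. fact (m i)) * (\<Prod>i=1..k. (y i / real i) ^ m i)
     = (\<Prod>i=1..k. ((-1)^(i-1) * y i / real i) ^ m i / fact (m i))"
    using sgn by simp
qed simp

lemma Ppoly_ee: "Ppoly k (\<lambda>i. gharm i n) = ee k n"
  unfolding Ppoly_RR
proof (rule newton_unique[of "\<lambda>k. RR (\<lambda>i. (-1)^(i-1) * gharm i n) k" "\<lambda>k. ee k n" "\<lambda>i. (-1)^(i-1) * gharm i n"])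
  show "RR (\<lambda>i. (- 1) ^ (i - 1) * gharm i n) 0 = 1" by (rule RR_0)
  show "ee 0 n = 1" by simp
  show "real (Suc k) * RR (\<lambda>i. (- 1) ^ (i - 1) * gharm i n) (Suc k) =
         (\<Sum>i\<le>k. (- 1) ^ (Suc i - 1) * gharm (Suc i) n * RR (\<lambda>i. (- 1) ^ (i - 1) * gharm i n) (k - i))" for k
    by (rule RR_newton_Suc)
  show "real (Suc k) * ee (Suc k) n = (\<Sum>i\<le>k. (- 1) ^ (Suc i - 1) * gharm (Suc i) n * ee (k - i) n)" for k
    using ee_newton[of k n] by simp
qed

lemma Qpoly_hh: "Qpoly k (\<lambda>i. gharm i n) = hh k n"
  unfolding Qpoly_RR
proof (rule newton_unique[of "\<lambda>k. RR (\<lambda>i. gharm i n) k" "\<lambda>k. hh k n" "\<lambda>i. gharm i n"])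
  show "RR (\<lambda>i. gharm i n) 0 = 1" by (rule RR_0)
  show "hh 0 n = 1" by simp
  show "real (Suc k) * RR (\<lambda>i. gharm i n) (Suc k) = (\<Sum>i\<le>k. gharm (Suc i) n * RR (\<lambda>i. gharm i n) (k - i))" for k
    by (rule RR_newton_Suc)
  show "real (Suc k) * hh (Suc k) n = (\<Sum>i\<le>k. gharm (Suc i) n * hh (k - i) n)" for k
    by (rule hh_newton)
qed



lemma ee_nonneg: "ee k n \<ge> 0"
  by (induction k n rule: ee.induct) auto

lemma hh_nonneg: "hh k n \<ge> 0"
  by (induction k n rule: hh.induct) auto

definition FN :: "real \<Rightarrow> nat \<Rightarrow> nat \<Rightarrow> real" where
  "FN y k N = (\<Sum>n<N. fact n * ee k n / pochhammer y (n + 2))"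

definition gg :: "real \<Rightarrow> nat \<Rightarrow> nat \<Rightarrow> real" where
  "gg y k N = (if k = 0 then 1 / y else FN y (k - 1) N)"

lemma f_rec: "fact (Suc n) * ee k (Suc n) = real (Suc n) * (fact n * ee k n) + (if k = 0 then 0 else fact n * ee (k - 1) n)"
proof (cases k)
  case (Suc j)
  have "1 + real n \<noteq> 0" by simp
  then show ?thesis using Suc by (simp add: field_simps)
qed simp

lemma FN_identity:
  assumes y: "y > 0"
  shows "y * FN y k N = gg y k N - fact N * ee k N / pochhammer y (N + 1)"
proof (induction N)
  case 0
  then show ?case using y by (cases k) (auto simp: FN_def gg_def)
next
  case (Suc N)
  have P1: "pochhammer y (N + 1) > 0" and P2: "pochhammer y (N + 2) > 0"
    using y by (auto intro: pochhammer_pos)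
  have P21: "pochhammer y (N + 2) = pochhammer y (N + 1) * (y + real N + 1)"
    by (simp add: pochhammer_Suc numeral_2_eq_2 algebra_simps)
  define a where "a = fact N * ee k N"
  define b where "b = (if k = 0 then 0 else fact N * ee (k - 1) N)"
  define P where "P = pochhammer y (N + 1)"
  define Q where "Q = pochhammer y (N + 2)"
  have eq1: "y * FN y k (Suc N) = gg y k N - a / P + y * (a / Q)"
    using Suc by (simp add: FN_def algebra_simps a_def P_def Q_def)
  have eq2: "gg y k N = gg y k (Suc N) - b / Q"
    by (simp add: gg_def FN_def b_def Q_def)
  have eq3: "fact (Suc N) * ee k (Suc N) = real (Suc N) * a + b"
    unfolding a_def b_def by (rule f_rec)
  have PQ: "P > 0" "Q = P * (y + real N + 1)" using P1 P21 by (simp_all add: P_def Q_def)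
  have yN: "y + real N + 1 > 0" using y by simp
  have Qpos: "Q > 0" using PQ yN by simp
  have aP: "a / P = a * (y + real N + 1) / Q"
    unfolding PQ(2) using PQ(1) yN by simp
  have alg: "G - b / Q - a / P + y * (a / Q) = G - (real (Suc N) * a + b) / Q" for G
    unfolding aP using Qpos by (simp add: field_simps)
  have "Suc N + 1 = N + 2" by simp
  then show ?case using eq1 eq2 eq3 alg[of "gg y k (Suc N)"] by (simp add: Q_def)
qed

lemma harmonic_shift_not_summable:
  assumes c: "c > 0" and y: "y > 0"
  shows "\<not> summable (\<lambda>n. c / (y + real n + 1))"
proof
  assume sm: "summable (\<lambda>n. c / (y + real n + 1))"
  have "summable (\<lambda>n. (c / (y + 1)) * inverse (real (Suc n)))"
  proof (rule summable_comparison_test[OF _ sm], intro exI[of _ 0] allI impI)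
    fix n :: nat
    have "(y + 1) * real (Suc n) \<ge> y + real n + 1" using y by (simp add: algebra_simps)
    then have "c / ((y + 1) * real (Suc n)) \<le> c / (y + real n + 1)"
      using c y by (intro divide_left_mono) auto
    then show "norm ((c / (y + 1)) * inverse (real (Suc n))) \<le> c / (y + real n + 1)"
      using c y by (simp add: field_simps)
  qed
  then have "summable (\<lambda>n. inverse (real (Suc n)))" using c y by simp
  then have "summable (\<lambda>n. inverse (real n))" by (subst (asm) summable_Suc_iff)
  then show False using not_summable_harmonic by blast
qed

lemma F_sums_step:
  assumes y: "y > 0" and gl: "gg y k \<longlonglongrightarrow> 1 / y ^ (k + 1)"
  shows "(\<lambda>n. fact n * ee k n / pochhammer y (n + 2)) sums (1 / y ^ (k + 2))"
proof -
  define t where "t n = fact n * ee k n / pochhammer y (n + 2)" for n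
  define a where "a N = fact N * ee k N / pochhammer y (N + 1)" for N
  define G where "G = 1 / y ^ (k + 1)"
  have tnn: "t n \<ge> 0" for n using y by (auto simp: t_def intro!: divide_nonneg_pos pochhammer_pos mult_nonneg_nonneg ee_nonneg)
  have ann: "a n \<ge> 0" for n using y by (auto simp: a_def intro!: divide_nonneg_pos pochhammer_pos mult_nonneg_nonneg ee_nonneg)
  have FNt: "FN y k N = (\<Sum>n<N. t n)" for N by (simp add: FN_def t_def)
  have aeq: "a N = gg y k N - y * FN y k N" for N using FN_identity[OF y, of k N] by (simp add: a_def)
  from gl have "Bseq (gg y k)" using convergent_imp_Bseq convergentI by blast
  then obtain B where B: "\<And>N. norm (gg y k N) \<le> B" by (auto simp: Bseq_def)
  have "(\<Sum>n<N. t n) \<le> B / y" for N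
  proof -
    have "y * FN y k N \<le> gg y k N" using aeq[of N] ann[of N] by simp
    also have "\<dots> \<le> B" using B[of N] by simp
    finally show ?thesis using y by (simp add: FNt field_simps mult.commute)
  qed
  then have sm: "summable t" by (intro summableI_nonneg_bounded[OF tnn])
  define L where "L = suminf t"
  have FNL: "FN y k \<longlonglongrightarrow> L" unfolding FNt[abs_def] L_def by (rule summable_LIMSEQ[OF sm])
  have alim: "a \<longlonglongrightarrow> G - y * L"
    unfolding aeq[abs_def] G_def by (intro tendsto_intros gl FNL)
  have A0: "G - y * L \<ge> 0" by (rule LIMSEQ_le_const[OF alim]) (use ann in auto)
  have "G - y * L = 0"
  proof (rule ccontr)
    assume "G - y * L \<noteq> 0"
    with A0 have Ap: "G - y * L > 0" by simp
    then have ev: "eventually (\<lambda>N. a N > (G - y * L) / 2) sequentially"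
    proof -
      have "(G - y * L) / 2 < G - y * L" using Ap by (simp add: mult.commute)
      from order_tendstoD(1)[OF alim this] show ?thesis .
    qed
    have "summable (\<lambda>N. ((G - y * L) / 2) / (y + real N + 1))"
    proof (rule summable_comparison_test_ev[OF _ sm])
      show "eventually (\<lambda>N. norm (((G - y * L) / 2) / (y + real N + 1)) \<le> t N) sequentially"
        using ev
      proof eventually_elim
        case (elim N)
        have P21: "pochhammer y (N + 2) = pochhammer y (N + 1) * (y + real N + 1)"
          by (simp add: pochhammer_Suc numeral_2_eq_2 algebra_simps)
        have "t N = a N / (y + real N + 1)" unfolding t_def a_def P21 by simp
        moreover have "((G - y * L) / 2) / (y + real N + 1) \<le> a N / (y + real N + 1)"
          using elim y by (intro divide_right_mono) auto
        moreover have "((G - y * L) / 2) / (y + real N + 1) \<ge> 0" using Ap y by simp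
        ultimately show ?case by (simp only: real_norm_def abs_of_nonneg)
      qed
    qed
    then show False using harmonic_shift_not_summable[of "(G - y * L) / 2" y] Ap y by simp
  qed
  then have "L = 1 / y ^ (k + 2)" using y by (simp add: G_def field_simps)
  with summable_sums[OF sm] show ?thesis by (simp add: L_def t_def[abs_def])
qed

lemma F_sums:
  assumes y: "y > 0"
  shows "(\<lambda>n. fact n * ee k n / pochhammer y (n + 2)) sums (1 / y ^ (k + 2))"
proof (induction k)
  case 0
  have "gg y 0 = (\<lambda>_. 1 / y)" by (simp add: gg_def[abs_def])
  then show ?case by (intro F_sums_step[OF y]) simp
next
  case (Suc k)
  have "gg y (Suc k) = FN y k" by (simp add: gg_def[abs_def])
  moreover have "FN y k \<longlonglongrightarrow> 1 / y ^ (k + 2)"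
    using Suc unfolding sums_def FN_def by simp
  ultimately show ?case by (intro F_sums_step[OF y]) simp
qed



definition dd :: "nat \<Rightarrow> real \<Rightarrow> nat \<Rightarrow> real" where
  "dd k y n = fact n * ee k n / (real (n + 1) * pochhammer y (n + 1))"

definition DN :: "nat \<Rightarrow> real \<Rightarrow> nat \<Rightarrow> real" where
  "DN k y N = (\<Sum>n<N. dd k y n)"

definition ZZ :: "nat \<Rightarrow> real \<Rightarrow> real" where
  "ZZ k y = (\<Sum>m. 1 / (y + real m) ^ (k + 2))"

lemma dd_nonneg: "y > 0 \<Longrightarrow> dd k y n \<ge> 0"
  by (auto simp: dd_def intro!: divide_nonneg_pos mult_pos_pos pochhammer_pos mult_nonneg_nonneg ee_nonneg)

lemma dd_diff:
  assumes y: "y > 0"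
  shows "dd k y n - dd k (y + 1) n = fact n * ee k n / pochhammer y (n + 2)"
proof -
  have P1: "pochhammer y (n + 2) = pochhammer y (n + 1) * (y + real n + 1)"
    by (simp add: pochhammer_Suc numeral_2_eq_2 algebra_simps)
  have P2: "pochhammer y (n + 2) = y * pochhammer (y + 1) (n + 1)"
    by (simp add: pochhammer_rec numeral_2_eq_2)
  have p1: "pochhammer y (n + 1) > 0" and p2: "pochhammer (y + 1) (n + 1) > 0"
    using y by (auto intro!: pochhammer_pos)
  have yn: "y + real n + 1 > 0" using y by simp
  have "dd k y n - dd k (y + 1) n
      = fact n * ee k n * (1 / (real (n + 1) * pochhammer y (n + 1)) - 1 / (real (n + 1) * pochhammer (y + 1) (n + 1)))"
    by (simp add: dd_def algebra_simps)
  also have "1 / (real (n + 1) * pochhammer y (n + 1)) - 1 / (real (n + 1) * pochhammer (y + 1) (n + 1))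
      = 1 / pochhammer y (n + 2)"
  proof -
    define A where "A = pochhammer y (n + 1)"
    define B where "B = pochhammer (y + 1) (n + 1)"
    define Q where "Q = pochhammer y (n + 2)"
    have Qp: "Q > 0" using y by (auto simp: Q_def intro!: pochhammer_pos)
    have iA: "1 / A = (y + real n + 1) / Q" unfolding A_def Q_def P1 using p1 yn by simp
    have iB: "1 / B = y / Q" unfolding B_def Q_def P2 using p2 y by simp
    have Ap: "A > 0" and Bp: "B > 0" using p1 p2 by (simp_all add: A_def B_def)
    have "1 / (real (n + 1) * A) - 1 / (real (n + 1) * B) = (1 / A - 1 / B) / real (n + 1)"
      by (simp add: diff_divide_distrib mult.commute)
    also have "\<dots> = 1 / Q" unfolding iA iB by (simp add: diff_divide_distrib[symmetric] add_ac)
    finally show ?thesis by (simp add: A_def B_def Q_def)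
  qed
  finally show ?thesis by simp
qed

lemma DN_shift:
  assumes y: "y > 0"
  shows "DN k y N = (\<Sum>m<M. FN (y + real m) k N) + DN k (y + real M) N"
proof (induction M)
  case 0 then show ?case by simp
next
  case (Suc M)
  have diff: "DN k (y + real M) N - DN k (y + real M + 1) N = FN (y + real M) k N"
    unfolding DN_def FN_def sum_subtractf[symmetric]
    by (rule sum.cong) (use y in \<open>simp_all add: dd_diff\<close>)
  have e: "y + real (Suc M) = y + real M + 1" by simp
  show ?case unfolding e sum.lessThan_Suc using Suc.IH diff by linarith
qed

lemma FN_le:
  assumes y: "y > 0"
  shows "FN y k N \<le> 1 / y ^ (k + 2)"
proof -
  have "FN y k N \<le> (\<Sum>n. fact n * ee k n / pochhammer y (n + 2))"
    unfolding FN_def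
    by (rule sum_le_suminf) (use y sums_summable[OF F_sums[OF y]] in \<open>auto intro!: divide_nonneg_pos pochhammer_pos mult_nonneg_nonneg ee_nonneg\<close>)
  also have "\<dots> = 1 / y ^ (k + 2)" using F_sums[OF y] by (simp add: sums_iff)
  finally show ?thesis .
qed

lemma FN_nonneg: "y > 0 \<Longrightarrow> FN y k N \<ge> 0"
  unfolding FN_def by (auto intro!: sum_nonneg divide_nonneg_pos pochhammer_pos mult_nonneg_nonneg ee_nonneg)

lemma poch_ge1: "x \<ge> 1 \<Longrightarrow> pochhammer x n \<ge> (1::real)"
proof (induction n)
  case (Suc n)
  then have "1 * 1 \<le> pochhammer x n * (x + real n)"
    by (intro mult_mono) auto
  then show ?case by (simp add: pochhammer_Suc)
qed simp

lemma poch_ge: "z \<ge> 1 \<Longrightarrow> pochhammer z (Suc n) \<ge> (z::real)"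
proof -
  assume z: "z \<ge> 1"
  have "z * 1 \<le> z * pochhammer (z + 1) n"
    using poch_ge1[of "z + 1" n] z by (intro mult_left_mono) auto
  then show ?thesis by (simp add: pochhammer_rec)
qed

lemma DN_small:
  assumes z: "z \<ge> 1"
  shows "DN k z N \<le> (\<Sum>n<N. fact n * ee k n / real (n + 1)) / z"
  unfolding DN_def sum_divide_distrib
proof (rule sum_mono)
  fix n
  have "pochhammer z (n + 1) \<ge> z" using poch_ge[OF z] by simp
  then have "real (n + 1) * z \<le> real (n + 1) * pochhammer z (n + 1)" by (intro mult_left_mono) auto
  moreover have "0 \<le> fact n * ee k n" by (simp add: ee_nonneg)
  moreover have "real (n + 1) * z > 0" using z by simp
  moreover have "pochhammer z (n + 1) > 0" using z by (intro pochhammer_pos) simp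
  ultimately have "fact n * ee k n / (real (n + 1) * pochhammer z (n + 1)) \<le> fact n * ee k n / (real (n + 1) * z)"
    by (intro divide_left_mono) auto
  then show "dd k z n \<le> fact n * ee k n / real (n + 1) / z" by (simp add: dd_def)
qed

lemma ZZ_summable:
  assumes y: "y > 0"
  shows "summable (\<lambda>m. 1 / (y + real m) ^ (k + 2))"
proof (rule summable_comparison_test_ev[OF _ inverse_power_summable[of 2]])
  show "eventually (\<lambda>m. norm (1 / (y + real m) ^ (k + 2)) \<le> inverse (real m ^ 2)) sequentially"
    using eventually_ge_at_top[of 1]
  proof eventually_elim
    case (elim m)
    have m1: "y + real m \<ge> 1" using elim y by simp
    have "real m ^ 2 \<le> (y + real m) ^ 2" using y by (intro power_mono) auto
    also have "\<dots> \<le> (y + real m) ^ (k + 2)" using m1 by (intro power_increasing) auto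
    finally have "real m ^ 2 \<le> (y + real m) ^ (k + 2)" .
    moreover have "real m ^ 2 > 0" using elim by simp
    ultimately have "inverse ((y + real m) ^ (k + 2)) \<le> inverse (real m ^ 2)"
      by (intro le_imp_inverse_le) auto
    moreover have "(y + real m) ^ (k + 2) > 0" using y by simp
    ultimately show ?case by (simp only: real_norm_def abs_of_pos divide_inverse mult_1 positive_imp_inverse_positive)
  qed
qed simp

lemma D_sums:
  assumes y: "y > 0"
  shows "(\<lambda>n. dd k y n) sums ZZ k y"
proof -
  define Z where "Z = ZZ k y"
  have Zs: "(\<lambda>m. 1 / (y + real m) ^ (k + 2)) sums Z"
    unfolding Z_def ZZ_def using ZZ_summable[OF y] by (rule summable_sums)
  have Zpart: "(\<Sum>m<M. 1 / (y + real m) ^ (k + 2)) \<le> Z" for M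
    unfolding Z_def ZZ_def by (rule sum_le_suminf[OF ZZ_summable[OF y]]) (use y in auto)
  have DNZ: "DN k y N \<le> Z" for N
  proof -
    define C where "C = (\<Sum>n<N. fact n * ee k n / real (n + 1))"
    have le: "DN k y N \<le> Z + C / (y + real M)" if M: "M \<ge> 1" for M
    proof -
      have "DN k y N = (\<Sum>m<M. FN (y + real m) k N) + DN k (y + real M) N" by (rule DN_shift[OF y])
      also have "(\<Sum>m<M. FN (y + real m) k N) \<le> (\<Sum>m<M. 1 / (y + real m) ^ (k + 2))"
      proof (rule sum_mono)
        fix m assume "m \<in> {..<M}"
        have "y + real m > 0" using y by simp
        then show "FN (y + real m) k N \<le> 1 / (y + real m) ^ (k + 2)" by (rule FN_le)
      qed
      also have "DN k (y + real M) N \<le> C / (y + real M)"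
        unfolding C_def by (rule DN_small) (use y M in auto)
      finally show ?thesis using Zpart[of M] by linarith
    qed
    have "(\<lambda>M. Z + C / (y + real M)) \<longlonglongrightarrow> Z + 0"
      by (intro tendsto_add tendsto_const) (use y in real_asymp)
    then have lim: "(\<lambda>M. Z + C / (y + real M)) \<longlonglongrightarrow> Z" by simp
    show ?thesis
      by (rule LIMSEQ_le_const[OF lim]) (use le in auto)
  qed
  have sm: "summable (\<lambda>n. dd k y n)"
    by (rule summableI_nonneg_bounded[where x = Z]) (use y DNZ in \<open>auto simp: dd_nonneg DN_def\<close>)
  define D where "D = suminf (\<lambda>n. dd k y n)"
  have DNlim: "DN k y \<longlonglongrightarrow> D" unfolding DN_def[abs_def] D_def by (rule summable_LIMSEQ[OF sm])
  have DN_le_D: "DN k y N \<le> D" for N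
    unfolding DN_def D_def by (rule sum_le_suminf[OF sm]) (use y in \<open>auto simp: dd_nonneg\<close>)
  have "D \<le> Z" by (rule LIMSEQ_le_const2[OF DNlim]) (use DNZ in auto)
  moreover have "Z \<le> D"
  proof -
    have part: "(\<Sum>m<M. 1 / (y + real m) ^ (k + 2)) \<le> D" for M
    proof -
      have lim: "(\<lambda>N. \<Sum>m<M. FN (y + real m) k N) \<longlonglongrightarrow> (\<Sum>m<M. 1 / (y + real m) ^ (k + 2))"
      proof (rule tendsto_sum)
        fix m assume "m \<in> {..<M}"
        have "y + real m > 0" using y by simp
        from F_sums[OF this, of k] show "(\<lambda>N. FN (y + real m) k N) \<longlonglongrightarrow> 1 / (y + real m) ^ (k + 2)"
          unfolding sums_def FN_def by simp
      qed
      have "(\<Sum>m<M. FN (y + real m) k N) \<le> D" for N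
      proof -
        have "(\<Sum>m<M. FN (y + real m) k N) \<le> DN k y N"
          using DN_shift[OF y, of k N M] y
          by (simp add: DN_def sum_nonneg dd_nonneg)
        then show ?thesis using DN_le_D[of N] by linarith
      qed
      then show ?thesis by (intro LIMSEQ_le_const2[OF lim]) auto
    qed
    have "(\<lambda>M. \<Sum>m<M. 1 / (y + real m) ^ (k + 2)) \<longlonglongrightarrow> Z" using Zs by (simp add: sums_def)
    then show ?thesis by (rule LIMSEQ_le_const2) (use part in auto)
  qed
  ultimately have "D = Z" by simp
  with summable_sums[OF sm] show ?thesis by (simp add: D_def Z_def)
qed



lemma nonneg_swap:
  fixes f :: "nat \<Rightarrow> nat \<Rightarrow> real"
  assumes nn: "\<And>n l. f n l \<ge> 0"
    and rows: "\<And>n. (\<lambda>l. f n l) sums g n"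
    and tot: "g sums S"
  shows "(\<lambda>l. \<Sum>n. f n l) sums S" and "\<And>l. summable (\<lambda>n. f n l)"
proof -
  define F where "F = (\<lambda>(n, l). f n l)"
  have gnn: "g n \<ge> 0" for n
  proof -
    have "summable (\<lambda>l. f n l)" using rows[of n] by (rule sums_summable)
    then have "suminf (\<lambda>l. f n l) \<ge> 0" by (rule suminf_nonneg) (rule nn)
    then show ?thesis using sums_unique[OF rows[of n]] by simp
  qed
  have rowsH: "((\<lambda>l. F (n, l)) has_sum g n) UNIV" for n
    unfolding F_def using sums_nonneg_imp_has_sum[OF rows[of n] nn[of n]] by simp
  have totH: "(g has_sum S) UNIV" using tot gnn by (rule sums_nonneg_imp_has_sum)
  have "F summable_on Sigma UNIV (\<lambda>_. UNIV)"
  proof (rule summable_on_SigmaI[OF _ has_sum_imp_summable[OF totH]])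
    show "((\<lambda>y. F (x, y)) has_sum g x) UNIV" for x by (rule rowsH)
    show "F (x, y) \<ge> 0" for x y by (simp add: F_def nn)
  qed
  then have FH: "(F has_sum S) (UNIV \<times> UNIV)"
    by (intro has_sum_SigmaI[OF _ totH]) (rule rowsH)
  then have FH': "((\<lambda>(l, n). F (n, l)) has_sum S) (UNIV \<times> UNIV)"
    by (subst (asm) has_sum_swap) simp
  have colS: "(\<lambda>n. f n l) summable_on UNIV" for l
  proof -
    have "((\<lambda>(l, n). F (n, l)) summable_on Sigma UNIV (\<lambda>_. UNIV))"
      using FH' unfolding summable_on_def by blast
    then have "(\<lambda>(l, n). f n l) summable_on Sigma UNIV (\<lambda>_. UNIV)"
      unfolding F_def by (simp add: case_prod_unfold)
    from summable_on_SigmaD1[OF this] show ?thesis by simp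
  qed
  have colsum: "summable (\<lambda>n. f n l)" for l
    using colS[of l] summable_on_UNIV_nonneg_real_iff[of "\<lambda>n. f n l"] nn by blast
  have colH: "((\<lambda>n. F (n, l)) has_sum (\<Sum>n. f n l)) UNIV" for l
    unfolding F_def using sums_nonneg_imp_has_sum[OF summable_sums[OF colsum[of l]]] nn by simp
  have "((\<lambda>l. \<Sum>n. f n l) has_sum S) UNIV"
    by (rule has_sum_SigmaD[OF FH']) (simp add: colH)
  then show "(\<lambda>l. \<Sum>n. f n l) sums S" by (rule has_sum_imp_sums)
  show "summable (\<lambda>n. f n l)" for l by (rule colsum)
qed

lemma powser_coeffs_zero:
  fixes a :: "nat \<Rightarrow> real"
  assumes d: "d > 0" and Z: "\<And>s. 0 < s \<Longrightarrow> s < d \<Longrightarrow> (\<lambda>l. a l * s ^ l) sums 0"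
  shows "a j = 0"
proof (induction j rule: less_induct)
  case (less j)
  have sh: "(\<lambda>l. a (l + j) * s ^ l) sums 0" if s: "0 < s" "s < d" for s
  proof -
    have "(\<lambda>l. a l * s ^ l) sums (0 + (\<Sum>i<j. a i * s ^ i))" using Z[OF s] less by simp
    then have "(\<lambda>l. a (l + j) * s ^ (l + j)) sums 0" by (subst sums_iff_shift)
    then have "(\<lambda>l. a (l + j) * s ^ (l + j) / s ^ j) sums (0 / s ^ j)" by (rule sums_divide)
    then show ?thesis using s by (simp add: power_add)
  qed
  define g where "g x = (\<Sum>l. a (l + j) * x ^ l)" for x :: real
  have cont: "isCont g 0"
    unfolding g_def[abs_def]
    by (rule isCont_powser[of _ "d / 2"]) (use sh[of "d / 2"] d in \<open>auto simp: sums_iff\<close>)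
  define X where "X i = d / 2 / (real i + 2)" for i
  have X0: "X \<longlonglongrightarrow> 0" unfolding X_def by real_asymp
  have "(\<lambda>i. g (X i)) \<longlonglongrightarrow> g 0" by (rule isCont_tendsto_compose[OF cont X0])
  moreover have "g (X i) = 0" for i
  proof -
    have "0 < X i" using d by (simp add: X_def)
    moreover have "d / 2 / (real i + 2) \<le> d / 2 / 1" using d by (intro divide_left_mono) auto
    then have "X i \<le> d / 2" by (simp add: X_def)
    then have "X i < d" using d by linarith
    ultimately have "0 < X i" "X i < d" by auto
    from sh[OF this] show ?thesis by (simp add: g_def sums_iff)
  qed
  ultimately have "g 0 = 0" by (simp add: LIMSEQ_const_iff)
  moreover have "g 0 = a j" unfolding g_def using powser_zero[of "\<lambda>l. a (l + j)"] by simp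
  ultimately show ?case by simp
qed

lemma neg_binomial:
  assumes z: "0 \<le> z" "z < (1::real)"
  shows "(\<lambda>l. real ((p + l) choose l) * z ^ l) sums (1 / (1 - z) ^ (p + 1))"
proof (induction p)
  case 0
  show ?case using geometric_sums[of z] z by simp
next
  case (Suc p)
  have g: "(\<lambda>l. z ^ l) sums (1 / (1 - z))" using geometric_sums[of z] z by simp
  have n1: "summable (\<lambda>l. norm (real ((p + l) choose l) * z ^ l))"
    using Suc sums_summable z by auto
  have n2: "summable (\<lambda>l. norm (z ^ l))" using g sums_summable z by auto
  have "(\<lambda>l. \<Sum>i\<le>l. (real ((p + i) choose i) * z ^ i) * z ^ (l - i)) sums
        ((\<Sum>l. real ((p + l) choose l) * z ^ l) * (\<Sum>l. z ^ l))"
    by (rule Cauchy_product_sums[OF n1 n2])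
  moreover have "(\<Sum>i\<le>l. (real ((p + i) choose i) * z ^ i) * z ^ (l - i)) = real ((Suc p + l) choose l) * z ^ l" for l
  proof -
    have "(\<Sum>i\<le>l. (real ((p + i) choose i) * z ^ i) * z ^ (l - i)) = (\<Sum>i\<le>l. real ((p + i) choose i)) * z ^ l"
      by (simp add: sum_distrib_right mult.assoc power_add[symmetric])
    also have "(\<Sum>i\<le>l. real ((p + i) choose i)) = real (Suc (p + l) choose l)"
      by (subst sum_choose_lower[symmetric]) simp
    finally show ?thesis by simp
  qed
  moreover have "(\<Sum>l. real ((p + l) choose l) * z ^ l) * (\<Sum>l. z ^ l) = 1 / (1 - z) ^ (Suc p + 1)"
    using Suc g by (simp add: sums_iff)
  ultimately show ?case by simp
qed

lemma hh_expand: "hh l (Suc n) = (\<Sum>i\<le>l. hh i n * (1 / real (Suc n)) ^ (l - i))"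
proof (induction l)
  case 0 then show ?case by simp
next
  case (Suc l)
  have "hh (Suc l) (Suc n) = hh (Suc l) n + (1 / real (Suc n)) * hh l (Suc n)" by simp
  also have "(1 / real (Suc n)) * hh l (Suc n) = (\<Sum>i\<le>l. hh i n * (1 / real (Suc n)) ^ (Suc l - i))"
    unfolding Suc by (simp add: sum_distrib_left Suc_diff_le mult_ac)
  finally show ?case by simp
qed

lemma W_sums:
  assumes s: "0 \<le> s" "s < (1::real)"
  shows "(\<lambda>l. hh l n * s ^ l) sums (fact n / pochhammer (1 - s) n)"
proof (induction n)
  case 0
  have "(\<lambda>l. hh l 0 * s ^ l) = (\<lambda>r. if r = 0 then 1 else 0)"
    by (rule ext, rename_tac r, case_tac r) auto
  then show ?case using sums_single[of 0 "\<lambda>_. 1::real"] by simp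
next
  case (Suc n)
  define z where "z = s / real (Suc n)"
  have z: "0 \<le> z" "z < 1" using s by (auto simp: z_def field_simps)
  have g: "(\<lambda>l. z ^ l) sums (1 / (1 - z))" using geometric_sums[of z] z by simp
  have n1: "summable (\<lambda>l. norm (hh l n * s ^ l))"
    using Suc sums_summable s by (auto simp: hh_nonneg)
  have n2: "summable (\<lambda>l. norm (z ^ l))" using g sums_summable z by auto
  have "(\<lambda>l. \<Sum>i\<le>l. (hh i n * s ^ i) * z ^ (l - i)) sums
        ((\<Sum>l. hh l n * s ^ l) * (\<Sum>l. z ^ l))"
    by (rule Cauchy_product_sums[OF n1 n2])
  moreover have "(\<Sum>i\<le>l. (hh i n * s ^ i) * z ^ (l - i)) = hh l (Suc n) * s ^ l" for l
  proof -
    have "(\<Sum>i\<le>l. (hh i n * s ^ i) * z ^ (l - i)) = (\<Sum>i\<le>l. hh i n * (1 / real (Suc n)) ^ (l - i) * s ^ l)"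
    proof (rule sum.cong)
      fix i assume "i \<in> {..l}"
      then have "s ^ l = s ^ i * s ^ (l - i)" by (simp add: power_add[symmetric])
      then show "(hh i n * s ^ i) * z ^ (l - i) = hh i n * (1 / real (Suc n)) ^ (l - i) * s ^ l"
        by (simp add: z_def power_divide field_simps)
    qed simp
    also have "\<dots> = hh l (Suc n) * s ^ l" by (simp add: hh_expand sum_distrib_right)
    finally show ?thesis .
  qed
  moreover have "(\<Sum>l. hh l n * s ^ l) * (\<Sum>l. z ^ l) = fact (Suc n) / pochhammer (1 - s) (Suc n)"
  proof -
    have "(\<Sum>l. hh l n * s ^ l) * (\<Sum>l. z ^ l) = fact n / pochhammer (1 - s) n * (1 / (1 - z))"
      using Suc g by (simp add: sums_iff)
    also have "1 / (1 - z) = real (Suc n) / (1 - s + real n)"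
      using s by (simp add: z_def field_simps)
    also have "fact n / pochhammer (1 - s) n * (real (Suc n) / (1 - s + real n)) = fact (Suc n) / pochhammer (1 - s) (Suc n)"
      by (simp add: pochhammer_Suc field_simps)
    finally show ?thesis .
  qed
  ultimately show ?case by simp
qed



lemma row_sums:
  assumes s: "0 \<le> s" "s < (1::real)"
  shows "(\<lambda>l. ee k n * hh l (Suc n) / (real (Suc n))^2 * s ^ l) sums dd k (1 - s) n"
proof -
  have "(\<lambda>l. ee k n / (real (Suc n))^2 * (hh l (Suc n) * s ^ l)) sums
        (ee k n / (real (Suc n))^2 * (fact (Suc n) / pochhammer (1 - s) (Suc n)))"
    by (rule sums_mult[OF W_sums[OF s]])
  moreover have "ee k n / (real (Suc n))^2 * (fact (Suc n) / pochhammer (1 - s) (Suc n)) = dd k (1 - s) n"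
  proof -
    have P: "pochhammer (1 - s) (Suc n) > 0" using s by (intro pochhammer_pos) simp
    have alg: "e / q^2 * (q * f / P) = f * e / (q * P)" if "q > 0" "P > 0" for e f q P :: real
      using that by (simp add: power2_eq_square field_simps)
    show ?thesis
      unfolding dd_def fact_Suc of_nat_mult using alg[OF _ P, of "real (Suc n)" "ee k n" "fact n"]
      by (simp add: mult_ac)
  qed
  ultimately show ?thesis by (simp add: mult_ac)
qed

lemma zeta_shift_summable:
  assumes "p \<ge> 2"
  shows "summable (\<lambda>m. 1 / real (Suc m) ^ p)"
proof -
  have "summable (\<lambda>m. inverse (real m ^ p))" by (rule inverse_power_summable) (use assms in auto)
  then have "summable (\<lambda>m. inverse (real (Suc m) ^ p))" by (subst summable_Suc_iff)
  then show ?thesis by (simp add: divide_inverse)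
qed

lemma hurwitz_sums:
  assumes s: "0 < s" "s < (1::real)"
  shows "(\<lambda>l. real ((k + 1 + l) choose l) * zeta_nat (l + k + 2) * s ^ l) sums ZZ k (1 - s)"
proof -
  define f where "f m l = real ((k + 1 + l) choose l) * s ^ l / real (Suc m) ^ (l + k + 2)" for m l
  have rows: "(\<lambda>l. f m l) sums (1 / (1 - s + real m) ^ (k + 2))" for m
  proof -
    define z where "z = s / real (Suc m)"
    have z: "0 \<le> z" "z < 1" using s by (auto simp: z_def field_simps)
    have "(\<lambda>l. (1 / real (Suc m) ^ (k + 2)) * (real ((k + 1 + l) choose l) * z ^ l)) sums
          ((1 / real (Suc m) ^ (k + 2)) * (1 / (1 - z) ^ (k + 1 + 1)))"
      by (rule sums_mult[OF neg_binomial[OF z]])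
    moreover have "(1 / real (Suc m) ^ (k + 2)) * (1 / (1 - z) ^ (k + 1 + 1)) = 1 / (1 - s + real m) ^ (k + 2)"
    proof -
      have "real (Suc m) * (1 - z) = 1 - s + real m" by (simp add: z_def field_simps)
      then show ?thesis by (simp add: power_mult_distrib[symmetric] field_simps)
    qed
    moreover have "(1 / real (Suc m) ^ (k + 2)) * (real ((k + 1 + l) choose l) * z ^ l) = f m l" for l
      by (simp add: f_def z_def power_divide power_add field_simps)
    ultimately show ?thesis by simp
  qed
  have tot: "(\<lambda>m. 1 / (1 - s + real m) ^ (k + 2)) sums ZZ k (1 - s)"
    unfolding ZZ_def using ZZ_summable[of "1 - s" k] s by (auto intro!: summable_sums)
  have nn: "f m l \<ge> 0" for m l using s by (simp add: f_def)
  have "(\<lambda>l. \<Sum>m. f m l) sums ZZ k (1 - s)" by (rule nonneg_swap(1)[OF nn rows tot])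
  moreover have "(\<Sum>m. f m l) = real ((k + 1 + l) choose l) * zeta_nat (l + k + 2) * s ^ l" for l
  proof -
    have "(\<Sum>m. f m l) = (\<Sum>m. (real ((k + 1 + l) choose l) * s ^ l) * (1 / real (Suc m) ^ (l + k + 2)))"
      by (simp add: f_def)
    also have "\<dots> = (real ((k + 1 + l) choose l) * s ^ l) * (\<Sum>m. 1 / real (Suc m) ^ (l + k + 2))"
      by (rule suminf_mult[OF zeta_shift_summable]) simp
    finally show ?thesis by (simp add: zeta_nat_def mult_ac)
  qed
  ultimately show ?thesis by simp
qed

theorem main_identity:
  "(\<lambda>n. ee k n * hh l (Suc n) / (real (Suc n))^2) sums (real ((k + 1 + l) choose l) * zeta_nat (l + k + 2))"
proof -
  define f where "f s n l = ee k n * hh l (Suc n) / (real (Suc n))^2 * s ^ l" for s :: real and n l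
  define T where "T l = (\<Sum>n. ee k n * hh l (Suc n) / (real (Suc n))^2)" for l
  define R where "R l = real ((k + 1 + l) choose l) * zeta_nat (l + k + 2)" for l
  have key: "(\<lambda>l. T l * s ^ l) sums ZZ k (1 - s) \<and> summable (\<lambda>n. ee k n * hh l (Suc n) / (real (Suc n))^2)"
    if s: "0 < s" "s < 1" for s l
  proof -
    have nn: "f s n l \<ge> 0" for n l using s by (simp add: f_def ee_nonneg hh_nonneg)
    have rows: "(\<lambda>l. f s n l) sums dd k (1 - s) n" for n unfolding f_def by (rule row_sums) (use s in auto)
    have tot: "(\<lambda>n. dd k (1 - s) n) sums ZZ k (1 - s)" by (rule D_sums) (use s in auto)
    have c1: "(\<lambda>l. \<Sum>n. f s n l) sums ZZ k (1 - s)" by (rule nonneg_swap(1)[OF nn rows tot])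
    have c2: "summable (\<lambda>n. f s n l)" for l by (rule nonneg_swap(2)[OF nn rows tot])
    have sm: "summable (\<lambda>n. ee k n * hh l (Suc n) / (real (Suc n))^2)" for l
    proof -
      have e: "(\<lambda>n. f s n l) = (\<lambda>n. s ^ l * (ee k n * hh l (Suc n) / (real (Suc n))^2))"
        by (simp add: f_def fun_eq_iff mult_ac)
      have "s ^ l \<noteq> 0" using s by simp
      with summable_mult_D[OF c2[of l, unfolded e]] show ?thesis by blast
    qed
    have "(\<Sum>n. f s n l) = T l * s ^ l" for l
      unfolding f_def T_def by (rule suminf_mult2[OF sm, symmetric])
    then show ?thesis using c1 sm by simp
  qed
  have "T j - R j = 0" for j
  proof (rule powser_coeffs_zero[of 1])
    fix s :: real assume s: "0 < s" "s < 1"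
    have "(\<lambda>l. T l * s ^ l - R l * s ^ l) sums (ZZ k (1 - s) - ZZ k (1 - s))"
      by (rule sums_diff) (use key[OF s] hurwitz_sums[OF s, of k] in \<open>simp_all add: R_def mult_ac\<close>)
    then show "(\<lambda>l. (T l - R l) * s ^ l) sums 0" by (simp add: algebra_simps)
  qed simp
  then have "T l = R l" by simp
  moreover have "summable (\<lambda>n. ee k n * hh l (Suc n) / (real (Suc n))^2)"
    using key[of "1/2" l] by simp
  ultimately show ?thesis using summable_sums[of "\<lambda>n. ee k n * hh l (Suc n) / (real (Suc n))^2"]
    unfolding T_def R_def by simp
qed

theorem theorem4:
  fixes k l :: nat
  shows "(\<lambda>n. Qpoly l (\<lambda>i. gharm i (n + 1)) * Ppoly k (\<lambda>i. gharm i n) / (real (n + 1))\<^sup>2)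
           sums (real ((l + k + 1) choose l) * zeta_nat (l + k + 2))"
  using main_identity[of k l] by (simp add: Qpoly_hh Ppoly_ee mult_ac add_ac)

end
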